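(* Let $V$ be a finite set with positive element weights ($\vert A \vert$ = total weight of $A \subseteq V$), and let $\mathcal{P}, \mathcal{P}'$ be partitions of $V$ into nonempty parts with $\vert \mathcal{P}' \vert \ge 2$. Define $\phi^* : 2^{\mathcal{P}} \to \mathbb{R}_{\ge 0}$ by $\phi^*(\mathcal{S}) = 0$ if $\mathcal{S} \in \{\emptyset, \mathcal{P}\}$ and $\phi^*(\mathcal{S}) = \min_{\emptyset \ne \mathcal{S}' \subsetneq \mathcal{P}'} \vert U_{\mathcal{S}} \triangle U_{\mathcal{S}'} \vert$ otherwise. Then $\phi^*$ is symmetric, i.e. $\phi^*(\mathcal{S}) = \phi^*(\mathcal{P} \setminus \mathcal{S})$ for all $\mathcal{S} \subseteq \mathcal{P}$; and $\phi^*$ is not submodular in general, i.e. there exist $V$, $\mathcal{P}$, $\mathcal{P}'$ and $\mathcal{S}, \mathcal{T} \subseteq \mathcal{P}$ with $\phi^*(\mathcal{S} \cup \mathcal{T}) > \phi^*(\mathcal{S}) + \phi^*(\mathcal{T}) - \phi^*(\mathcal{S} \cap \mathcal{T})$.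
   Context: $U_{\mathcal{S}}$ denotes the union of the sets in $\mathcal{S}$; $\triangle$ is symmetric difference. *)

theory Defs
  imports Complex_Main "HOL-Library.Disjoint_Sets"
begin

definition wt :: "('a \<Rightarrow> real) \<Rightarrow> 'a set \<Rightarrow> real" where
  "wt w A = (\<Sum>x\<in>A. w x)"

definition symdiff :: "'a set \<Rightarrow> 'a set \<Rightarrow> 'a set" where
  "symdiff A B = (A - B) \<union> (B - A)"

definition phi_star :: "('a \<Rightarrow> real) \<Rightarrow> 'a set set \<Rightarrow> 'a set set \<Rightarrow> 'a set set \<Rightarrow> real" where
  "phi_star w P P' S =
     (if S = {} \<or> S = P then 0
      else Min {wt w (symdiff (\<Union>S) (\<Union>S')) | S'. S' \<noteq> {} \<and> S' \<subset> P'})"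

definition setting :: "'a set \<Rightarrow> ('a \<Rightarrow> real) \<Rightarrow> 'a set set \<Rightarrow> 'a set set \<Rightarrow> bool" where
  "setting V w P P' \<longleftrightarrow> finite V \<and> (\<forall>x\<in>V. w x > 0) \<and>
     partition_on V P \<and> partition_on V P' \<and> card P' \<ge> 2"

end

theory Submission
  imports Defs
begin

lemma union_compl:
  assumes "partition_on V P" "S \<subseteq> P"
  shows "\<Union>(P - S) = V - \<Union>S"
proof -
  have U: "\<Union>P = V" using assms(1) by (simp add: partition_on_def)
  have d: "disjoint P" using assms(1) by (simp add: partition_on_def)
  show ?thesis
  proof
    show "\<Union>(P - S) \<subseteq> V - \<Union>S"
    proof
      fix x assume "x \<in> \<Union>(P - S)"
      then obtain p where p: "p \<in> P" "p \<notin> S" "x \<in> p" by auto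
      have "x \<notin> \<Union>S"
      proof
        assume "x \<in> \<Union>S"
        then obtain q where q: "q \<in> S" "x \<in> q" by auto
        then have "q \<in> P" "p \<noteq> q" using assms(2) p by auto
        then show False using d p q by (auto simp: disjoint_def)
      qed
      then show "x \<in> V - \<Union>S" using U p by auto
    qed
    show "V - \<Union>S \<subseteq> \<Union>(P - S)" using U by auto
  qed
qed

lemma part1:
  assumes st: "setting V w P P'" and S: "S \<subseteq> P"
  shows "phi_star w P P' S = phi_star w P P' (P - S)"
proof (cases "S = {} \<or> S = P")
  case True
  then show ?thesis by (auto simp: phi_star_def)
next
  case False
  then have n1: "P - S \<noteq> {}" "P - S \<noteq> P" using S by auto
  have pP: "partition_on V P" and pP': "partition_on V P'" using st by (auto simp: setting_def)
  have UV: "\<Union>S \<subseteq> V" using pP S by (auto simp: partition_on_def)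
  have UP': "\<And>S'. S' \<subseteq> P' \<Longrightarrow> \<Union>S' \<subseteq> V" using pP' by (auto simp: partition_on_def)
  have key: "\<And>S'. S' \<subseteq> P' \<Longrightarrow> symdiff (\<Union>(P - S)) (\<Union>S') = symdiff (\<Union>S) (\<Union>(P' - S'))"
  proof -
    fix S' assume a: "S' \<subseteq> P'"
    show "symdiff (\<Union>(P - S)) (\<Union>S') = symdiff (\<Union>S) (\<Union>(P' - S'))"
      unfolding union_compl[OF pP S] union_compl[OF pP' a] symdiff_def
      using UV UP'[OF a] by auto
  qed
  have "{wt w (symdiff (\<Union>(P - S)) (\<Union>S')) | S'. S' \<noteq> {} \<and> S' \<subset> P'}
      = {wt w (symdiff (\<Union>S) (\<Union>S')) | S'. S' \<noteq> {} \<and> S' \<subset> P'}"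
  proof (intro set_eqI iffI)
    fix y assume "y \<in> {wt w (symdiff (\<Union>(P - S)) (\<Union>S')) | S'. S' \<noteq> {} \<and> S' \<subset> P'}"
    then obtain S' where "y = wt w (symdiff (\<Union>(P - S)) (\<Union>S'))" "S' \<noteq> {}" "S' \<subset> P'" by auto
    then show "y \<in> {wt w (symdiff (\<Union>S) (\<Union>S')) | S'. S' \<noteq> {} \<and> S' \<subset> P'}"
      using key[of S'] by (intro CollectI exI[of _ "P' - S'"]) auto
  next
    fix y assume "y \<in> {wt w (symdiff (\<Union>S) (\<Union>S')) | S'. S' \<noteq> {} \<and> S' \<subset> P'}"
    then obtain S' where y: "y = wt w (symdiff (\<Union>S) (\<Union>S'))" "S' \<noteq> {}" "S' \<subset> P'" by auto
    have e: "P' - (P' - S') = S'" using y by auto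
    show "y \<in> {wt w (symdiff (\<Union>(P - S)) (\<Union>S')) | S'. S' \<noteq> {} \<and> S' \<subset> P'}"
      using key[of "P' - S'"] y e by (intro CollectI exI[of _ "P' - S'"]) auto
  qed
  then show ?thesis using False n1 by (simp add: phi_star_def)
qed

lemma subsets2:
  assumes "a \<noteq> b"
  shows "{S'. S' \<noteq> {} \<and> S' \<subset> {a, b}} = {{a}, {b}}"
proof
  show "{S'. S' \<noteq> {} \<and> S' \<subset> {a, b}} \<subseteq> {{a}, {b}}"
  proof
    fix S' assume h: "S' \<in> {S'. S' \<noteq> {} \<and> S' \<subset> {a, b}}"
    then have "S' \<subseteq> {a,b}" "S' \<noteq> {}" "S' \<noteq> {a,b}" by auto
    moreover have "Pow {a,b} = {{},{a},{b},{a,b}}" by (auto simp: Pow_insert)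
    ultimately show "S' \<in> {{a}, {b}}" by blast
  qed
  show "{{a}, {b}} \<subseteq> {S'. S' \<noteq> {} \<and> S' \<subset> {a, b}}" using assms by auto
qed

lemma part2:
  "\<exists>(V :: nat set) w P P' S T. setting V w P P' \<and> S \<subseteq> P \<and> T \<subseteq> P \<and>
            phi_star w P P' (S \<union> T) >
              phi_star w P P' S + phi_star w P P' T - phi_star w P P' (S \<inter> T)"
proof -
  define w :: "nat \<Rightarrow> real" where "w = (\<lambda>x. if x = 2 then 2 else 1)"
  define V :: "nat set" where "V = {0,1,2}"
  define P :: "nat set set" where "P = {{0},{1},{2}}"
  define P' :: "nat set set" where "P' = {{0},{1,2}}"
  have st: "setting V w P P'"
    unfolding setting_def V_def w_def P_def P'_def
    by (auto simp: partition_on_def disjoint_def)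
  have notP: "\<And>X. {1::nat} \<notin> X \<Longrightarrow> X \<noteq> P" unfolding P_def by auto
  have sub: "{S'. S' \<noteq> {} \<and> S' \<subset> P'} = {{{0}}, {{1,2}}}"
    unfolding P'_def by (rule subsets2) auto
  have m: "\<And>A. {wt w (symdiff A (\<Union>S')) | S'. S' \<noteq> {} \<and> S' \<subset> P'}
      = {wt w (symdiff A {0}), wt w (symdiff A {1,2})}"
  proof -
    fix A
    have "{wt w (symdiff A (\<Union>S')) | S'. S' \<noteq> {} \<and> S' \<subset> P'}
        = (\<lambda>S'. wt w (symdiff A (\<Union>S'))) ` {S'. S' \<noteq> {} \<and> S' \<subset> P'}" by auto
    then show "{wt w (symdiff A (\<Union>S')) | S'. S' \<noteq> {} \<and> S' \<subset> P'}
      = {wt w (symdiff A {0}), wt w (symdiff A {1,2})}" unfolding sub by simp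
  qed
  have gen: "\<And>X A a b. X \<noteq> {} \<Longrightarrow> X \<noteq> P \<Longrightarrow> \<Union>X = A \<Longrightarrow>
      wt w (symdiff A {0}) = a \<Longrightarrow> wt w (symdiff A {1,2}) = b \<Longrightarrow> phi_star w P P' X = min a b"
  proof -
    fix X A a b assume h: "X \<noteq> {}" "X \<noteq> P" "\<Union>X = A" "wt w (symdiff A {0}) = a" "wt w (symdiff A {1,2}) = b"
    have "phi_star w P P' X = Min {wt w (symdiff A (\<Union>S')) | S'. S' \<noteq> {} \<and> S' \<subset> P'}"
      using h(1,2,3) unfolding phi_star_def by simp
    also have "\<dots> = Min {a, b}" unfolding m h(4,5) ..
    also have "\<dots> = min a b" by simp
    finally show "phi_star w P P' X = min a b" .
  qed
  have s1: "symdiff {2,0} {0} = {2::nat}" "symdiff {2,0} {1,2} = {0,1::nat}"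
     "symdiff {2} {0} = {2,0::nat}" "symdiff {2} {1,2} = {1::nat}"
     "symdiff {0} {0} = ({}::nat set)" "symdiff {0} {1,2} = {0,1,2::nat}"
    by (auto simp: symdiff_def)
  have w1: "wt w {2} = 2" "wt w {0,1} = 2" "wt w {2,0} = 3" "wt w {1} = 1" "wt w {} = 0"
    "wt w {0,1,2} = 4"
    by (simp_all add: wt_def w_def)
  have "phi_star w P P' ({{2}} \<union> {{0}}) = min 2 2"
    by (rule gen[where A="{2,0}"]) (simp, rule notP, simp, force, simp only: s1 w1, simp only: s1 w1)
  then have p1: "phi_star w P P' ({{2}} \<union> {{0}}) = 2" by simp
  have "phi_star w P P' {{2}} = min 3 1"
    by (rule gen[where A="{2}"]) (simp, rule notP, simp, simp, simp only: s1 w1, simp only: s1 w1)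
  then have p2: "phi_star w P P' {{2}} = 1" by simp
  have "phi_star w P P' {{0}} = min 0 4"
    by (rule gen[where A="{0}"]) (simp, rule notP, simp, simp, simp only: s1 w1, simp only: s1 w1)
  then have p3: "phi_star w P P' {{0}} = 0" by simp
  have p4: "phi_star w P P' ({{2}} \<inter> {{0}}) = 0" by (simp add: phi_star_def)
  show ?thesis
    apply (rule exI[of _ V], rule exI[of _ w], rule exI[of _ P], rule exI[of _ P'],
           rule exI[of _ "{{2}}"], rule exI[of _ "{{0}}"])
    using st p1 p2 p3 p4 by (simp add: P_def)
qed

theorem proposition8:
  shows "(\<forall>(V :: 'a set) w P P' S. setting V w P P' \<and> S \<subseteq> P \<longrightarrow>
            phi_star w P P' S = phi_star w P P' (P - S))
       \<and> (\<exists>(V :: nat set) w P P' S T. setting V w P P' \<and> S \<subseteq> P \<and> T \<subseteq> P \<and>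
            phi_star w P P' (S \<union> T) >
              phi_star w P P' S + phi_star w P P' T - phi_star w P P' (S \<inter> T))"
  using part1 part2 by blast

end
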